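(* Let $n,p\ge1$ be integers and let $A=A^{p+1}_{n+1}$ with the multiplication $\odot$ defined in the context. Then $\odot$ is associative and commutative, and $\langle A;\odot,\top\rangle$ is a commutative monoid with neutral element $\top=\langle(n,0),p\rangle$.
   Context: Order $\mathbb{Z}\times\mathbb{Z}$ lexicographically: $(m,r)\preccurlyeq(k,s)$ iff $m<k$, or $m=k$ and $r\le s$; addition/subtraction of pairs is componentwise, and $\min,\max$ of pairs refer to $\preccurlyeq$. For an integer $n\ge1$ let $L^\omega_{n+1}=\{(m,r)\in\mathbb{Z}^2:(0,0)\preccurlyeq(m,r)\preccurlyeq(n,0)\}$ with $x\ast y=\max\{(0,0),x+y-(n,0)\}$ and $x\to y=\min\{(n,0),(n,0)-x+y\}$. For an integer $p\ge1$ let $L_{p+1}=\{0,1,\dots,p\}$ with $\alpha\ast\beta=\max\{0,\alpha+\beta-p\}$. Define $$A=A^{p+1}_{n+1}=\{\langle(m,r),\alpha\rangle:(m,r)\in L^\omega_{n+1},\ \alpha\in\{0,p\}\}\cup\{\langle(m,r),\alpha\rangle:(0,0)\preccurlyeq(m,r)\preccurlyeq(n-1,0),\ 0<\alpha<p\}.$$ Put $\bot=\langle(n,0),0\rangle$, $\top=\langle(n,0),p\rangle$. For $a=\langle(m,r),\alpha\rangle$, $b=\langle(k,s),\beta\rangle\in A$ define $a\odot b$ by: (P1) if $\alpha,\beta\ge1$ and $\alpha+\beta>p$: $a\odot b=\langle(m,r)\ast(k,s),\alpha+\beta-p\rangle$; (P2) if $\alpha,\beta\ge1$ and $\alpha+\beta\le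 p$: $a\odot b=\langle\min\{(n,0),(2n-(m+k+1),-(r+s))\},0\rangle$; (P3) if $\alpha\ge1$, $\beta=0$: $a\odot b=\langle(m,r)\to(k,s),0\rangle$, and if $\alpha=0$, $\beta\ge1$: $a\odot b=\langle(k,s)\to(m,r),0\rangle$; (P4) if $\alpha=\beta=0$: $a\odot b=\langle\min\{(n,0),(m+k+1,r+s)\},0\rangle$. *)

theory Defs
  imports "HOL-Algebra.Group"
begin

definition lexle :: "int \<times> int \<Rightarrow> int \<times> int \<Rightarrow> bool" where
  "lexle x y \<longleftrightarrow> fst x < fst y \<or> (fst x = fst y \<and> snd x \<le> snd y)"

definition lexmin :: "int \<times> int \<Rightarrow> int \<times> int \<Rightarrow> int \<times> int" where
  "lexmin x y = (if lexle x y then x else y)"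

definition lexmax :: "int \<times> int \<Rightarrow> int \<times> int \<Rightarrow> int \<times> int" where
  "lexmax x y = (if lexle x y then y else x)"

definition lstar :: "int \<Rightarrow> int \<times> int \<Rightarrow> int \<times> int \<Rightarrow> int \<times> int" where
  "lstar n x y = lexmax (0,0) (fst x + fst y - n, snd x + snd y)"

definition limp :: "int \<Rightarrow> int \<times> int \<Rightarrow> int \<times> int \<Rightarrow> int \<times> int" where
  "limp n x y = lexmin (n,0) (n - fst x + fst y, - snd x + snd y)"

(* carrier A^{p+1}_{n+1}; elements <(m,r),alpha> encoded as ((m,r),alpha) *)
definition Acar :: "int \<Rightarrow> int \<Rightarrow> ((int \<times> int) \<times> int) set" where
  "Acar n p =
     {(x, \<alpha>). lexle (0,0) x \<and> lexle x (n,0) \<and> (\<alpha> = 0 \<or> \<alpha> = p)}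
   \<union> {(x, \<alpha>). lexle (0,0) x \<and> lexle x (n - 1, 0) \<and> 0 < \<alpha> \<and> \<alpha> < p}"

definition Abot :: "int \<Rightarrow> int \<Rightarrow> (int \<times> int) \<times> int" where
  "Abot n p = ((n,0), 0)"

definition Atop :: "int \<Rightarrow> int \<Rightarrow> (int \<times> int) \<times> int" where
  "Atop n p = ((n,0), p)"

definition odot :: "int \<Rightarrow> int \<Rightarrow> (int \<times> int) \<times> int \<Rightarrow> (int \<times> int) \<times> int
                    \<Rightarrow> (int \<times> int) \<times> int" where
  "odot n p a b =
    (let x = fst a; \<alpha> = snd a; y = fst b; \<beta> = snd b in
     if 1 \<le> \<alpha> \<and> 1 \<le> \<beta> \<and> \<alpha> + \<beta> > p then (lstar n x y, \<alpha> + \<beta> - p)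
     else if 1 \<le> \<alpha> \<and> 1 \<le> \<beta> then
       (lexmin (n,0) (2*n - (fst x + fst y + 1), - (snd x + snd y)), 0)
     else if 1 \<le> \<alpha> \<and> \<beta> = 0 then (limp n x y, 0)
     else if \<alpha> = 0 \<and> 1 \<le> \<beta> then (limp n y x, 0)
     else (lexmin (n,0) (fst x + fst y + 1, snd x + snd y), 0))"

definition Amonoid :: "int \<Rightarrow> int \<Rightarrow> ((int \<times> int) \<times> int) monoid" where
  "Amonoid n p = \<lparr>carrier = Acar n p, mult = odot n p, one = Atop n p\<rparr>"

end

theory Submission
  imports Defs
begin

lemma memD:
  assumes "((m,r),a) \<in> Acar n p" "1 \<le> p"
  shows "lexle (0,0) (m,r)" "lexle (m,r) (n,0)" "0 \<le> a" "a \<le> p"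
        "a < p \<Longrightarrow> 0 < a \<Longrightarrow> lexle (m,r) (n-1,0)"
  using assms by (auto simp: Acar_def lexle_def)

lemma memI:
  assumes "lexle (0,0) x" "lexle x (n,0)" "0 \<le> a" "a \<le> p"
        "a < p \<Longrightarrow> 0 < a \<Longrightarrow> lexle x (n-1,0)"
  shows "(x,a) \<in> Acar n p"
  using assms unfolding Acar_def by (cases "a = 0 \<or> a = p") auto

lemma P1: "1 \<le> a \<Longrightarrow> 1 \<le> b \<Longrightarrow> a + b > p \<Longrightarrow> odot n p (x,a) (y,b) = (lstar n x y, a+b-p)"
  by (simp add: odot_def)
lemma P2: "1 \<le> a \<Longrightarrow> 1 \<le> b \<Longrightarrow> a + b \<le> p \<Longrightarrow> odot n p (x,a) (y,b) = (lexmin (n,0) (2*n - (fst x + fst y + 1), - (snd x + snd y)), 0)"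
  by (simp add: odot_def)
lemma P3a: "1 \<le> a \<Longrightarrow> odot n p (x,a) (y,0) = (limp n x y, 0)"
  by (simp add: odot_def)
lemma P3b: "1 \<le> b \<Longrightarrow> odot n p (x,0) (y,b) = (limp n y x, 0)"
  by (simp add: odot_def)
lemma P4: "odot n p (x,0) (y,0) = (lexmin (n,0) (fst x + fst y + 1, snd x + snd y), 0)"
  by (simp add: odot_def)

lemma lstar_comm: "lstar n x y = lstar n y x"
  unfolding lstar_def by (simp add: add.commute)

lemma comm:
  assumes "0 \<le> snd a" "0 \<le> snd b"
  shows "odot n p a b = odot n p b a"
proof -
  obtain x al where a: "a = (x,al)" by (metis prod.collapse)
  obtain y be where b: "b = (y,be)" by (metis prod.collapse)
  have z: "al = 0 \<or> 1 \<le> al" "be = 0 \<or> 1 \<le> be" using assms a b by auto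
  show ?thesis unfolding a b
  proof (cases "al = 0")
    case True
    then show "odot n p (x, al) (y, be) = odot n p (y, be) (x, al)"
      using z by (cases "be = 0") (simp_all add: P3a P3b P4 add.commute)
  next
    case False
    then have "1 \<le> al" using z by simp
    then show "odot n p (x, al) (y, be) = odot n p (y, be) (x, al)"
      using z by (cases "be = 0"; cases "al + be > p") (simp_all add: P1 P2 P3a P3b lstar_comm add.commute)
  qed
qed
definition phi :: "int \<Rightarrow> int \<times> int \<Rightarrow> int" where "phi K u = K * fst u + snd u"

lemma cmp:
  assumes K: "2*S < K" and u: "\<bar>snd u\<bar> \<le> S" and v: "\<bar>snd v\<bar> \<le> S"
  shows "lexle u v \<longleftrightarrow> phi K u \<le> phi K v"
proof (cases "fst u < fst v")
  case True
  have "K * (fst v - fst u) \<ge> K * 1" using True K u by (intro mult_left_mono) auto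
  then have "K * fst v - K * fst u \<ge> K" by (simp add: right_diff_distrib)
  then show ?thesis using True u v K by (simp add: lexle_def phi_def abs_le_iff)
next
  case False
  show ?thesis
  proof (cases "fst u = fst v")
    case True then show ?thesis by (simp add: lexle_def phi_def)
  next
    case F2: False
    with False have "fst v < fst u" by simp
    then have "K * (fst u - fst v) \<ge> K * 1" using K u by (intro mult_left_mono) auto
    then have "K * fst u - K * fst v \<ge> K" by (simp add: right_diff_distrib)
    then show ?thesis using False F2 u v K by (simp add: lexle_def phi_def abs_le_iff)
  qed
qed

lemma phi_inj:
  assumes K: "2*S < K" and u: "\<bar>snd u\<bar> \<le> S" and v: "\<bar>snd v\<bar> \<le> S" and e: "phi K u = phi K v"
  shows "u = v"
proof -
  have "lexle u v" "lexle v u" using cmp[OF K u v] cmp[OF K v u] e by auto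
  then show ?thesis by (auto simp: lexle_def prod_eq_iff)
qed

lemma phi_lexmin:
  assumes K: "2*S < K" and u: "\<bar>snd u\<bar> \<le> S" and v: "\<bar>snd v\<bar> \<le> S"
  shows "phi K (lexmin u v) = min (phi K u) (phi K v)" "\<bar>snd (lexmin u v)\<bar> \<le> S"
  using cmp[OF K u v] u v by (auto simp: lexmin_def)

lemma phi_lexmax:
  assumes K: "2*S < K" and u: "\<bar>snd u\<bar> \<le> S" and v: "\<bar>snd v\<bar> \<le> S"
  shows "phi K (lexmax u v) = max (phi K u) (phi K v)" "\<bar>snd (lexmax u v)\<bar> \<le> S"
  using cmp[OF K u v] u v by (auto simp: lexmax_def)

lemma L1:
  assumes K: "2*(s+t) < K" and x: "\<bar>snd x\<bar> \<le> s" and y: "\<bar>snd y\<bar> \<le> t"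
  shows "phi K (lstar n x y) = max 0 (phi K x + phi K y - K*n)" "\<bar>snd (lstar n x y)\<bar> \<le> s+t"
proof -
  have b0: "\<bar>snd (0::int,0::int)\<bar> \<le> s+t" using x y by simp
  have b1: "\<bar>snd (fst x + fst y - n, snd x + snd y)\<bar> \<le> s+t" using x y by (simp add: abs_le_iff)
  show "phi K (lstar n x y) = max 0 (phi K x + phi K y - K*n)"
    unfolding lstar_def phi_lexmax(1)[OF K b0 b1] by (simp add: phi_def algebra_simps)
  show "\<bar>snd (lstar n x y)\<bar> \<le> s+t" unfolding lstar_def by (rule phi_lexmax(2)[OF K b0 b1])
qed

lemma L3:
  assumes K: "2*(s+t) < K" and x: "\<bar>snd x\<bar> \<le> s" and y: "\<bar>snd y\<bar> \<le> t"
  shows "phi K (limp n x y) = min (K*n) (K*n - phi K x + phi K y)" "\<bar>snd (limp n x y)\<bar> \<le> s+t"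
proof -
  have b0: "\<bar>snd (n,0::int)\<bar> \<le> s+t" using x y by simp
  have b1: "\<bar>snd (n - fst x + fst y, - snd x + snd y)\<bar> \<le> s+t" using x y by (simp add: abs_le_iff)
  show "phi K (limp n x y) = min (K*n) (K*n - phi K x + phi K y)"
    unfolding limp_def phi_lexmin(1)[OF K b0 b1] by (simp add: phi_def algebra_simps)
  show "\<bar>snd (limp n x y)\<bar> \<le> s+t" unfolding limp_def by (rule phi_lexmin(2)[OF K b0 b1])
qed

lemma L2:
  assumes K: "2*(s+t) < K" and x: "\<bar>snd x\<bar> \<le> s" and y: "\<bar>snd y\<bar> \<le> t"
  shows "phi K (lexmin (n,0) (2*n - (fst x + fst y + 1), - (snd x + snd y))) = min (K*n) (2*(K*n) - (phi K x + phi K y + K))"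
        "\<bar>snd (lexmin (n,0) (2*n - (fst x + fst y + 1), - (snd x + snd y)))\<bar> \<le> s+t"
proof -
  have b0: "\<bar>snd (n,0::int)\<bar> \<le> s+t" using x y by simp
  have b1: "\<bar>snd (2*n - (fst x + fst y + 1), - (snd x + snd y))\<bar> \<le> s+t" using x y by (simp add: abs_le_iff)
  show "phi K (lexmin (n,0) (2*n - (fst x + fst y + 1), - (snd x + snd y))) = min (K*n) (2*(K*n) - (phi K x + phi K y + K))"
    unfolding phi_lexmin(1)[OF K b0 b1] by (simp add: phi_def algebra_simps)
  show "\<bar>snd (lexmin (n,0) (2*n - (fst x + fst y + 1), - (snd x + snd y)))\<bar> \<le> s+t" by (rule phi_lexmin(2)[OF K b0 b1])
qed

lemma L4:
  assumes K: "2*(s+t) < K" and x: "\<bar>snd x\<bar> \<le> s" and y: "\<bar>snd y\<bar> \<le> t"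
  shows "phi K (lexmin (n,0) (fst x + fst y + 1, snd x + snd y)) = min (K*n) (phi K x + phi K y + K)"
        "\<bar>snd (lexmin (n,0) (fst x + fst y + 1, snd x + snd y))\<bar> \<le> s+t"
proof -
  have b0: "\<bar>snd (n,0::int)\<bar> \<le> s+t" using x y by simp
  have b1: "\<bar>snd (fst x + fst y + 1, snd x + snd y)\<bar> \<le> s+t" using x y by (simp add: abs_le_iff)
  show "phi K (lexmin (n,0) (fst x + fst y + 1, snd x + snd y)) = min (K*n) (phi K x + phi K y + K)"
    unfolding phi_lexmin(1)[OF K b0 b1] by (simp add: phi_def algebra_simps)
  show "\<bar>snd (lexmin (n,0) (fst x + fst y + 1, snd x + snd y))\<bar> \<le> s+t" by (rule phi_lexmin(2)[OF K b0 b1])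
qed
definition odotI :: "int \<Rightarrow> int \<Rightarrow> int \<Rightarrow> int \<times> int \<Rightarrow> int \<times> int \<Rightarrow> int \<times> int" where
  "odotI K N p a b =
    (let x = fst a; \<alpha> = snd a; y = fst b; \<beta> = snd b in
     if 1 \<le> \<alpha> \<and> 1 \<le> \<beta> \<and> \<alpha> + \<beta> > p then (max 0 (x + y - N), \<alpha> + \<beta> - p)
     else if 1 \<le> \<alpha> \<and> 1 \<le> \<beta> then (min N (2*N - (x + y + K)), 0)
     else if 1 \<le> \<alpha> \<and> \<beta> = 0 then (min N (N - x + y), 0)
     else if \<alpha> = 0 \<and> 1 \<le> \<beta> then (min N (N - y + x), 0)
     else (min N (x + y + K), 0))"

lemma Q1: "1 \<le> a \<Longrightarrow> 1 \<le> b \<Longrightarrow> a + b > p \<Longrightarrow> odotI K N p (x,a) (y,b) = (max 0 (x + y - N), a+b-p)"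
  by (simp add: odotI_def)
lemma Q2: "1 \<le> a \<Longrightarrow> 1 \<le> b \<Longrightarrow> a + b \<le> p \<Longrightarrow> odotI K N p (x,a) (y,b) = (min N (2*N - (x + y + K)), 0)"
  by (simp add: odotI_def)
lemma Q3a: "1 \<le> a \<Longrightarrow> odotI K N p (x,a) (y,0) = (min N (N - x + y), 0)"
  by (simp add: odotI_def)
lemma Q3b: "1 \<le> b \<Longrightarrow> odotI K N p (x,0) (y,b) = (min N (N - y + x), 0)"
  by (simp add: odotI_def)
lemma Q4: "odotI K N p (x,0) (y,0) = (min N (x + y + K), 0)"
  by (simp add: odotI_def)

lemma d000: "1 \<le> K \<Longrightarrow> K \<le> N \<Longrightarrow> 1 \<le> p \<Longrightarrow> 0 \<le> x1 \<Longrightarrow> x1 \<le> N \<Longrightarrow> 0 \<le> x2 \<Longrightarrow> x2 \<le> N \<Longrightarrow> 0 \<le> x3 \<Longrightarrow> x3 \<le> N \<Longrightarrow> 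
  odotI K N p (odotI K N p (x1,0) (x2,0)) (x3,0) = odotI K N p (x1,0) (odotI K N p (x2,0) (x3,0))"
  apply (simp_all add: Q1 Q2 Q3a Q3b Q4)
  done

lemma d001: "1 \<le> K \<Longrightarrow> K \<le> N \<Longrightarrow> 1 \<le> p \<Longrightarrow> 0 \<le> x1 \<Longrightarrow> x1 \<le> N \<Longrightarrow> 0 \<le> x2 \<Longrightarrow> x2 \<le> N \<Longrightarrow> 0 \<le> x3 \<Longrightarrow> x3 \<le> N \<Longrightarrow> 1 \<le> a3 \<Longrightarrow> a3 \<le> p \<Longrightarrow> (a3 < p \<Longrightarrow> x3 \<le> N - K) \<Longrightarrow> 
  odotI K N p (odotI K N p (x1,0) (x2,0)) (x3,a3) = odotI K N p (x1,0) (odotI K N p (x2,0) (x3,a3))"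
  apply (cases "a3 < p")
  apply (simp_all add: Q1 Q2 Q3a Q3b Q4)
  done

lemma d010: "1 \<le> K \<Longrightarrow> K \<le> N \<Longrightarrow> 1 \<le> p \<Longrightarrow> 0 \<le> x1 \<Longrightarrow> x1 \<le> N \<Longrightarrow> 0 \<le> x2 \<Longrightarrow> x2 \<le> N \<Longrightarrow> 1 \<le> a2 \<Longrightarrow> a2 \<le> p \<Longrightarrow> (a2 < p \<Longrightarrow> x2 \<le> N - K) \<Longrightarrow> 0 \<le> x3 \<Longrightarrow> x3 \<le> N \<Longrightarrow> 
  odotI K N p (odotI K N p (x1,0) (x2,a2)) (x3,0) = odotI K N p (x1,0) (odotI K N p (x2,a2) (x3,0))"
  apply (cases "a2 < p")
  apply (simp_all add: Q1 Q2 Q3a Q3b Q4)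
  done

lemma d011: "1 \<le> K \<Longrightarrow> K \<le> N \<Longrightarrow> 1 \<le> p \<Longrightarrow> 0 \<le> x1 \<Longrightarrow> x1 \<le> N \<Longrightarrow> 0 \<le> x2 \<Longrightarrow> x2 \<le> N \<Longrightarrow> 1 \<le> a2 \<Longrightarrow> a2 \<le> p \<Longrightarrow> (a2 < p \<Longrightarrow> x2 \<le> N - K) \<Longrightarrow> 0 \<le> x3 \<Longrightarrow> x3 \<le> N \<Longrightarrow> 1 \<le> a3 \<Longrightarrow> a3 \<le> p \<Longrightarrow> (a3 < p \<Longrightarrow> x3 \<le> N - K) \<Longrightarrow> 
  odotI K N p (odotI K N p (x1,0) (x2,a2)) (x3,a3) = odotI K N p (x1,0) (odotI K N p (x2,a2) (x3,a3))"
  apply (cases "a2 < p"; cases "a3 < p"; cases "a2+a3>p")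
  apply (simp_all add: Q1 Q2 Q3a Q3b Q4)
  done

lemma d100: "1 \<le> K \<Longrightarrow> K \<le> N \<Longrightarrow> 1 \<le> p \<Longrightarrow> 0 \<le> x1 \<Longrightarrow> x1 \<le> N \<Longrightarrow> 1 \<le> a1 \<Longrightarrow> a1 \<le> p \<Longrightarrow> (a1 < p \<Longrightarrow> x1 \<le> N - K) \<Longrightarrow> 0 \<le> x2 \<Longrightarrow> x2 \<le> N \<Longrightarrow> 0 \<le> x3 \<Longrightarrow> x3 \<le> N \<Longrightarrow> 
  odotI K N p (odotI K N p (x1,a1) (x2,0)) (x3,0) = odotI K N p (x1,a1) (odotI K N p (x2,0) (x3,0))"
  apply (cases "a1 < p")
  apply (simp_all add: Q1 Q2 Q3a Q3b Q4)
  done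

lemma d101: "1 \<le> K \<Longrightarrow> K \<le> N \<Longrightarrow> 1 \<le> p \<Longrightarrow> 0 \<le> x1 \<Longrightarrow> x1 \<le> N \<Longrightarrow> 1 \<le> a1 \<Longrightarrow> a1 \<le> p \<Longrightarrow> (a1 < p \<Longrightarrow> x1 \<le> N - K) \<Longrightarrow> 0 \<le> x2 \<Longrightarrow> x2 \<le> N \<Longrightarrow> 0 \<le> x3 \<Longrightarrow> x3 \<le> N \<Longrightarrow> 1 \<le> a3 \<Longrightarrow> a3 \<le> p \<Longrightarrow> (a3 < p \<Longrightarrow> x3 \<le> N - K) \<Longrightarrow> 
  odotI K N p (odotI K N p (x1,a1) (x2,0)) (x3,a3) = odotI K N p (x1,a1) (odotI K N p (x2,0) (x3,a3))"
  apply (cases "a1 < p"; cases "a3 < p")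
  apply (simp_all add: Q1 Q2 Q3a Q3b Q4)
  done

lemma d110: "1 \<le> K \<Longrightarrow> K \<le> N \<Longrightarrow> 1 \<le> p \<Longrightarrow> 0 \<le> x1 \<Longrightarrow> x1 \<le> N \<Longrightarrow> 1 \<le> a1 \<Longrightarrow> a1 \<le> p \<Longrightarrow> (a1 < p \<Longrightarrow> x1 \<le> N - K) \<Longrightarrow> 0 \<le> x2 \<Longrightarrow> x2 \<le> N \<Longrightarrow> 1 \<le> a2 \<Longrightarrow> a2 \<le> p \<Longrightarrow> (a2 < p \<Longrightarrow> x2 \<le> N - K) \<Longrightarrow> 0 \<le> x3 \<Longrightarrow> x3 \<le> N \<Longrightarrow> 
  odotI K N p (odotI K N p (x1,a1) (x2,a2)) (x3,0) = odotI K N p (x1,a1) (odotI K N p (x2,a2) (x3,0))"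
  apply (cases "a1 < p"; cases "a2 < p"; cases "a1+a2>p")
  apply (simp_all add: Q1 Q2 Q3a Q3b Q4)
  done

lemma d111: "1 \<le> K \<Longrightarrow> K \<le> N \<Longrightarrow> 1 \<le> p \<Longrightarrow> 0 \<le> x1 \<Longrightarrow> x1 \<le> N \<Longrightarrow> 1 \<le> a1 \<Longrightarrow> a1 \<le> p \<Longrightarrow> (a1 < p \<Longrightarrow> x1 \<le> N - K) \<Longrightarrow> 0 \<le> x2 \<Longrightarrow> x2 \<le> N \<Longrightarrow> 1 \<le> a2 \<Longrightarrow> a2 \<le> p \<Longrightarrow> (a2 < p \<Longrightarrow> x2 \<le> N - K) \<Longrightarrow> 0 \<le> x3 \<Longrightarrow> x3 \<le> N \<Longrightarrow> 1 \<le> a3 \<Longrightarrow> a3 \<le> p \<Longrightarrow> (a3 < p \<Longrightarrow> x3 \<le> N - K) \<Longrightarrow> 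
  odotI K N p (odotI K N p (x1,a1) (x2,a2)) (x3,a3) = odotI K N p (x1,a1) (odotI K N p (x2,a2) (x3,a3))"
  apply (cases "a1 < p"; cases "a2 < p"; cases "a3 < p"; cases "a1+a2>p"; cases "a2+a3>p"; cases "a1+a2+a3>2*p")
  apply (simp_all add: Q1 Q2 Q3a Q3b Q4)
  done

definition Phi :: "int \<Rightarrow> (int \<times> int) \<times> int \<Rightarrow> int \<times> int" where
  "Phi K a = (phi K (fst a), snd a)"

lemma assocI:
  assumes "1 \<le> K" "K \<le> N" "1 \<le> p"
   "0 \<le> x1" "x1 \<le> N" "0 \<le> a1" "a1 \<le> p" "a1 < p \<Longrightarrow> 0 < a1 \<Longrightarrow> x1 \<le> N - K"
   "0 \<le> x2" "x2 \<le> N" "0 \<le> a2" "a2 \<le> p" "a2 < p \<Longrightarrow> 0 < a2 \<Longrightarrow> x2 \<le> N - K"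
   "0 \<le> x3" "x3 \<le> N" "0 \<le> a3" "a3 \<le> p" "a3 < p \<Longrightarrow> 0 < a3 \<Longrightarrow> x3 \<le> N - K"
  shows "odotI K N p (odotI K N p (x1,a1) (x2,a2)) (x3,a3) = odotI K N p (x1,a1) (odotI K N p (x2,a2) (x3,a3))"
proof -
  let ?g = "odotI K N p (odotI K N p (x1,a1) (x2,a2)) (x3,a3) = odotI K N p (x1,a1) (odotI K N p (x2,a2) (x3,a3))"
  have z1: "a1 = 0 \<or> 1 \<le> a1" "a2 = 0 \<or> 1 \<le> a2" "a3 = 0 \<or> 1 \<le> a3" using assms by linarith+
  have d000': "a1 = 0 \<Longrightarrow> a2 = 0 \<Longrightarrow> a3 = 0 \<Longrightarrow> ?g"
    using d000[of K N p x1 x2 x3] assms by auto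
  have d001': "a1 = 0 \<Longrightarrow> a2 = 0 \<Longrightarrow> 1 \<le> a3 \<Longrightarrow> ?g"
    using d001[of K N p x1 x2 x3 a3] assms by auto
  have d010': "a1 = 0 \<Longrightarrow> 1 \<le> a2 \<Longrightarrow> a3 = 0 \<Longrightarrow> ?g"
    using d010[of K N p x1 x2 a2 x3] assms by auto
  have d011': "a1 = 0 \<Longrightarrow> 1 \<le> a2 \<Longrightarrow> 1 \<le> a3 \<Longrightarrow> ?g"
    using d011[of K N p x1 x2 a2 x3 a3] assms by auto
  have d100': "1 \<le> a1 \<Longrightarrow> a2 = 0 \<Longrightarrow> a3 = 0 \<Longrightarrow> ?g"
    using d100[of K N p x1 a1 x2 x3] assms by auto
  have d101': "1 \<le> a1 \<Longrightarrow> a2 = 0 \<Longrightarrow> 1 \<le> a3 \<Longrightarrow> ?g"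
    using d101[of K N p x1 a1 x2 x3 a3] assms by auto
  have d110': "1 \<le> a1 \<Longrightarrow> 1 \<le> a2 \<Longrightarrow> a3 = 0 \<Longrightarrow> ?g"
    using d110[of K N p x1 a1 x2 a2 x3] assms by auto
  have d111': "1 \<le> a1 \<Longrightarrow> 1 \<le> a2 \<Longrightarrow> 1 \<le> a3 \<Longrightarrow> ?g"
    using d111[of K N p x1 a1 x2 a2 x3 a3] assms by auto
  show ?thesis using z1 d000' d001' d010' d011' d100' d101' d110' d111' by blast
qed

lemma transfer:
  assumes K: "2*(s+t) < K" and x: "\<bar>snd x\<bar> \<le> s" and y: "\<bar>snd y\<bar> \<le> t"
    and al: "0 \<le> al" and be: "0 \<le> be"
  shows "Phi K (odot n p (x,al) (y,be)) = odotI K (K*n) p (Phi K (x,al)) (Phi K (y,be))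
        \<and> \<bar>snd (fst (odot n p (x,al) (y,be)))\<bar> \<le> s+t"
proof -
  have K': "2*(t+s) < K" using K by simp
  have b3: "\<bar>snd (limp n y x)\<bar> \<le> s+t" using L3(2)[OF K' y x] by (simp add: add.commute)
  note l = L1[OF K x y] L2[OF K x y] L3[OF K x y] L3(1)[OF K' y x] b3 L4[OF K x y]
  have z: "al = 0 \<or> 1 \<le> al" "be = 0 \<or> 1 \<le> be" using al be by auto
  show ?thesis
  proof (cases "al = 0")
    case True
    then show ?thesis
      using z l by (cases "be = 0") (simp_all add: P3a P3b P4 Q3a Q3b Q4 Phi_def)
  next
    case False
    then have "1 \<le> al" using z by simp
    then show ?thesis
      using z l by (cases "be = 0"; cases "al + be > p") (simp_all add: P1 P2 P3a P3b Q1 Q2 Q3a Q3b Phi_def)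
  qed
qed

lemma closedI:
  assumes "1 \<le> K" "K \<le> N" "1 \<le> p"
   "0 \<le> x1" "x1 \<le> N" "0 \<le> a1" "a1 \<le> p" "a1 < p \<longrightarrow> 0 < a1 \<longrightarrow> x1 \<le> N - K"
   "0 \<le> x2" "x2 \<le> N" "0 \<le> a2" "a2 \<le> p" "a2 < p \<longrightarrow> 0 < a2 \<longrightarrow> x2 \<le> N - K"
   and e: "odotI K N p (x1,a1) (x2,a2) = (y,g)"
  shows "0 \<le> y \<and> y \<le> N \<and> 0 \<le> g \<and> g \<le> p \<and> (g < p \<longrightarrow> 0 < g \<longrightarrow> y \<le> N - K)"
proof -
  have z: "a1 = 0 \<or> 1 \<le> a1" "a2 = 0 \<or> 1 \<le> a2" using assms by auto
  show ?thesis
  proof (cases "a1 = 0")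
    case True
    then show ?thesis using z assms e
      by (cases "a2 = 0") (auto simp: Q3a Q3b Q4)
  next
    case False
    then have "1 \<le> a1" using z by simp
    then show ?thesis using z assms e
      by (cases "a2 = 0"; cases "a1 + a2 > p"; cases "a1 < p"; cases "a2 < p") (auto simp: Q1 Q2 Q3a Q3b)
  qed
qed

lemma memi:
  assumes "1 \<le> n" "1 \<le> p" "(x,al) \<in> Acar n p" "\<bar>snd x\<bar> \<le> S" "2*S < K"
  shows "0 \<le> phi K x \<and> phi K x \<le> K*n \<and> 0 \<le> al \<and> al \<le> p \<and> (al < p \<longrightarrow> 0 < al \<longrightarrow> phi K x \<le> K*n - K)"
proof -
  obtain m r where xm: "x = (m,r)" by (metis prod.collapse)
  note h = memD[OF assms(3)[unfolded xm] assms(2)]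
  have b0: "\<bar>snd (0::int,0::int)\<bar> \<le> S" "\<bar>snd (n,0::int)\<bar> \<le> S" "\<bar>snd (n-1,0::int)\<bar> \<le> S"
    using assms(4) by auto
  have bm: "\<bar>snd (m,r)\<bar> \<le> S" using assms(4) xm by simp
  have "0 \<le> phi K x" using cmp[OF assms(5) b0(1) bm] h(1) xm by (simp add: phi_def)
  moreover have "phi K x \<le> K*n" using cmp[OF assms(5) bm b0(2)] h(2) xm by (simp add: phi_def)
  moreover have "al < p \<longrightarrow> 0 < al \<longrightarrow> phi K x \<le> K*n - K"
    using cmp[OF assms(5) bm b0(3)] h(5) xm by (simp add: phi_def algebra_simps)
  ultimately show ?thesis using h by simp
qed

lemma memi_rev:
  assumes "\<bar>snd x\<bar> \<le> S" "2*S < K"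
    "0 \<le> phi K x \<and> phi K x \<le> K*n \<and> 0 \<le> al \<and> al \<le> p \<and> (al < p \<longrightarrow> 0 < al \<longrightarrow> phi K x \<le> K*n - K)"
  shows "(x,al) \<in> Acar n p"
proof -
  have b0: "\<bar>snd (0::int,0::int)\<bar> \<le> S" "\<bar>snd (n,0::int)\<bar> \<le> S" "\<bar>snd (n-1,0::int)\<bar> \<le> S"
    using assms(1) by auto
  have "lexle (0,0) x" using cmp[OF assms(2) b0(1) assms(1)] assms(3) by (simp add: phi_def)
  moreover have "lexle x (n,0)" using cmp[OF assms(2) assms(1) b0(2)] assms(3) by (simp add: phi_def)
  moreover have "al < p \<Longrightarrow> 0 < al \<Longrightarrow> lexle x (n-1,0)"
    using cmp[OF assms(2) assms(1) b0(3)] assms(3) by (simp add: phi_def algebra_simps)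
  ultimately show ?thesis using assms(3) by (intro memI) auto
qed

lemma closed:
  assumes "1 \<le> n" "1 \<le> p" "a \<in> Acar n p" "b \<in> Acar n p"
  shows "odot n p a b \<in> Acar n p"
proof -
  obtain x1 a1 where a: "a = (x1,a1)" by (metis prod.collapse)
  obtain x2 a2 where b: "b = (x2,a2)" by (metis prod.collapse)
  define s1 where "s1 = \<bar>snd x1\<bar>"
  define s2 where "s2 = \<bar>snd x2\<bar>"
  define K where "K = 2*(s1+s2) + 1"
  have bx: "\<bar>snd x1\<bar> \<le> s1" "\<bar>snd x2\<bar> \<le> s2"
    and sp: "0 \<le> s1" "0 \<le> s2" by (auto simp: s1_def s2_def)
  have K1: "1 \<le> K" using sp by (simp add: K_def)
  have KN: "K \<le> K*n" using K1 assms(1) by simp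
  have Ka: "2*(s1+s2) < K" "2*s1 < K" "2*s2 < K" using sp by (auto simp: K_def)
  have m1: "0 \<le> phi K x1 \<and> phi K x1 \<le> K*n \<and> 0 \<le> a1 \<and> a1 \<le> p \<and> (a1 < p \<longrightarrow> 0 < a1 \<longrightarrow> phi K x1 \<le> K*n - K)"
    using memi[OF assms(1,2) assms(3)[unfolded a] bx(1) Ka(2)] .
  have m2: "0 \<le> phi K x2 \<and> phi K x2 \<le> K*n \<and> 0 \<le> a2 \<and> a2 \<le> p \<and> (a2 < p \<longrightarrow> 0 < a2 \<longrightarrow> phi K x2 \<le> K*n - K)"
    using memi[OF assms(1,2) assms(4)[unfolded b] bx(2) Ka(3)] .
  obtain v g where e: "odot n p (x1,a1) (x2,a2) = (v,g)" by (metis prod.collapse)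
  have t: "Phi K (v,g) = odotI K (K*n) p (phi K x1,a1) (phi K x2,a2)" "\<bar>snd v\<bar> \<le> s1+s2"
    using transfer[OF Ka(1) bx(1) bx(2), of a1 a2 n p] m1 m2 e by (auto simp: Phi_def)
  have "odotI K (K*n) p (phi K x1,a1) (phi K x2,a2) = (phi K v, g)" using t(1) by (simp add: Phi_def)
  from closedI[OF K1 KN assms(2) _ _ _ _ _ _ _ _ _ _ this] m1 m2
  have "0 \<le> phi K v \<and> phi K v \<le> K*n \<and> 0 \<le> g \<and> g \<le> p \<and> (g < p \<longrightarrow> 0 < g \<longrightarrow> phi K v \<le> K*n - K)"
    by blast
  then have "(v,g) \<in> Acar n p" by (rule memi_rev[OF t(2) Ka(1)])
  then show ?thesis using a b e by simp
qed

lemma mem_nonneg: "(x,g) \<in> Acar n p \<Longrightarrow> 1 \<le> p \<Longrightarrow> 0 \<le> g"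
  by (auto simp: Acar_def)

lemma assoc:
  assumes "1 \<le> n" "1 \<le> p" "a \<in> Acar n p" "b \<in> Acar n p" "c \<in> Acar n p"
  shows "odot n p (odot n p a b) c = odot n p a (odot n p b c)"
proof -
  obtain x1 a1 where a: "a = (x1,a1)" by (metis prod.collapse)
  obtain x2 a2 where b: "b = (x2,a2)" by (metis prod.collapse)
  obtain x3 a3 where c: "c = (x3,a3)" by (metis prod.collapse)
  define s1 where "s1 = \<bar>snd x1\<bar>"
  define s2 where "s2 = \<bar>snd x2\<bar>"
  define s3 where "s3 = \<bar>snd x3\<bar>"
  define K where "K = 2*(s1+s2+s3) + 1"
  have bx: "\<bar>snd x1\<bar> \<le> s1" "\<bar>snd x2\<bar> \<le> s2" "\<bar>snd x3\<bar> \<le> s3"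
    and sp: "0 \<le> s1" "0 \<le> s2" "0 \<le> s3" by (auto simp: s1_def s2_def s3_def)
  have K1: "1 \<le> K" using sp by (simp add: K_def)
  have KN: "K \<le> K*n" using K1 assms(1) by simp
  have Ka: "2*(s1+s2) < K" "2*((s1+s2)+s3) < K" "2*(s2+s3) < K" "2*(s1+(s2+s3)) < K"
     "2*s1 < K" "2*s2 < K" "2*s3 < K"
    using sp by (auto simp: K_def)
  have m1: "0 \<le> phi K x1 \<and> phi K x1 \<le> K*n \<and> 0 \<le> a1 \<and> a1 \<le> p \<and> (a1 < p \<longrightarrow> 0 < a1 \<longrightarrow> phi K x1 \<le> K*n - K)"
    using memi[OF assms(1,2) assms(3)[unfolded a] bx(1) Ka(5)] .
  have m2: "0 \<le> phi K x2 \<and> phi K x2 \<le> K*n \<and> 0 \<le> a2 \<and> a2 \<le> p \<and> (a2 < p \<longrightarrow> 0 < a2 \<longrightarrow> phi K x2 \<le> K*n - K)"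
    using memi[OF assms(1,2) assms(4)[unfolded b] bx(2) Ka(6)] .
  have m3: "0 \<le> phi K x3 \<and> phi K x3 \<le> K*n \<and> 0 \<le> a3 \<and> a3 \<le> p \<and> (a3 < p \<longrightarrow> 0 < a3 \<longrightarrow> phi K x3 \<le> K*n - K)"
    using memi[OF assms(1,2) assms(5)[unfolded c] bx(3) Ka(7)] .
  have I: "odotI K (K*n) p (odotI K (K*n) p (phi K x1,a1) (phi K x2,a2)) (phi K x3,a3)
         = odotI K (K*n) p (phi K x1,a1) (odotI K (K*n) p (phi K x2,a2) (phi K x3,a3))"
    using m1 m2 m3 K1 KN assms(2) by (intro assocI) auto
  obtain u1 g1 where e1: "odot n p (x1,a1) (x2,a2) = (u1,g1)" by (metis prod.collapse)
  obtain u2 g2 where e2: "odot n p (x2,a2) (x3,a3) = (u2,g2)" by (metis prod.collapse)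
  have g1: "0 \<le> g1" using closed[OF assms(1,2,3,4)] a b e1 assms(2) mem_nonneg by metis
  have g2: "0 \<le> g2" using closed[OF assms(1,2,4,5)] b c e2 assms(2) mem_nonneg by metis
  have t1: "Phi K (u1,g1) = odotI K (K*n) p (phi K x1,a1) (phi K x2,a2)" "\<bar>snd u1\<bar> \<le> s1+s2"
    using transfer[OF Ka(1) bx(1) bx(2), of a1 a2 n p] m1 m2 e1 by (auto simp: Phi_def)
  have t2: "Phi K (u2,g2) = odotI K (K*n) p (phi K x2,a2) (phi K x3,a3)" "\<bar>snd u2\<bar> \<le> s2+s3"
    using transfer[OF Ka(3) bx(2) bx(3), of a2 a3 n p] m2 m3 e2 by (auto simp: Phi_def)
  obtain v1 h1 where f1: "odot n p (u1,g1) (x3,a3) = (v1,h1)" by (metis prod.collapse)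
  obtain v2 h2 where f2: "odot n p (x1,a1) (u2,g2) = (v2,h2)" by (metis prod.collapse)
  have t3: "Phi K (v1,h1) = odotI K (K*n) p (Phi K (u1,g1)) (phi K x3,a3)" "\<bar>snd v1\<bar> \<le> (s1+s2)+s3"
    using transfer[OF Ka(2) t1(2) bx(3), of g1 a3 n p] g1 m3 f1 by (auto simp: Phi_def)
  have t4: "Phi K (v2,h2) = odotI K (K*n) p (phi K x1,a1) (Phi K (u2,g2))" "\<bar>snd v2\<bar> \<le> s1+(s2+s3)"
    using transfer[OF Ka(4) bx(1) t2(2), of a1 g2 n p] g2 m1 f2 by (auto simp: Phi_def)
  have "Phi K (v1,h1) = Phi K (v2,h2)" using t3(1) t4(1) t1(1) t2(1) I by simp
  then have eq: "phi K v1 = phi K v2" "h1 = h2" by (auto simp: Phi_def)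
  have "v1 = v2" using phi_inj[OF Ka(2) t3(2) _ eq(1)] t4(2) by (simp add: add.assoc)
  then show ?thesis using eq(2) a b c e1 e2 f1 f2 by simp
qed

lemma unit:
  assumes "1 \<le> n" "1 \<le> p" "a \<in> Acar n p"
  shows "odot n p (Atop n p) a = a"
proof -
  obtain m1 r1 a1 where a: "a = ((m1,r1),a1)" by (metis prod.collapse)
  note h1 = memD[OF assms(3)[unfolded a] assms(2)]
  have z1: "a1 = 0 \<or> 1 \<le> a1" using h1 by linarith
  then show ?thesis unfolding a Atop_def
  proof
    assume "a1 = 0"
    then show "odot n p ((n, 0), p) ((m1, r1), a1) = ((m1, r1), a1)"
      using h1 assms(2) by (auto simp: P3a limp_def lexmin_def lexle_def)
  next
    assume "1 \<le> a1"
    then show "odot n p ((n, 0), p) ((m1, r1), a1) = ((m1, r1), a1)"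
      using h1 assms(2) by (simp add: P1 lstar_def lexmax_def lexle_def)
  qed
qed

lemma commA: "a \<in> Acar n p \<Longrightarrow> b \<in> Acar n p \<Longrightarrow> 1 \<le> p \<Longrightarrow> odot n p a b = odot n p b a"
  by (rule comm) (metis mem_nonneg prod.collapse)+

theorem mainTheorem3:
  fixes n p :: int
  assumes "1 \<le> n" and "1 \<le> p"
  shows "(\<forall>a\<in>Acar n p. \<forall>b\<in>Acar n p. \<forall>c\<in>Acar n p.
            odot n p (odot n p a b) c = odot n p a (odot n p b c))
       \<and> (\<forall>a\<in>Acar n p. \<forall>b\<in>Acar n p. odot n p a b = odot n p b a)
       \<and> comm_monoid (Amonoid n p)"
proof (intro conjI ballI)
  show "comm_monoid (Amonoid n p)"
  proof (rule comm_monoidI)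
    show "\<one>\<^bsub>Amonoid n p\<^esub> \<in> carrier (Amonoid n p)"
      using assms by (auto simp: Amonoid_def Atop_def Acar_def lexle_def)
  next
    fix x y assume "x \<in> carrier (Amonoid n p)" "y \<in> carrier (Amonoid n p)"
    then show "x \<otimes>\<^bsub>Amonoid n p\<^esub> y \<in> carrier (Amonoid n p)"
      using closed[OF assms] by (simp add: Amonoid_def)
  next
    fix x y z assume "x \<in> carrier (Amonoid n p)" "y \<in> carrier (Amonoid n p)" "z \<in> carrier (Amonoid n p)"
    then show "x \<otimes>\<^bsub>Amonoid n p\<^esub> y \<otimes>\<^bsub>Amonoid n p\<^esub> z = x \<otimes>\<^bsub>Amonoid n p\<^esub> (y \<otimes>\<^bsub>Amonoid n p\<^esub> z)"
      using assoc[OF assms] by (simp add: Amonoid_def)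
  next
    fix x assume "x \<in> carrier (Amonoid n p)"
    then show "\<one>\<^bsub>Amonoid n p\<^esub> \<otimes>\<^bsub>Amonoid n p\<^esub> x = x"
      using unit[OF assms] by (simp add: Amonoid_def)
  next
    fix x y assume "x \<in> carrier (Amonoid n p)" "y \<in> carrier (Amonoid n p)"
    then show "x \<otimes>\<^bsub>Amonoid n p\<^esub> y = y \<otimes>\<^bsub>Amonoid n p\<^esub> x"
      using commA assms by (simp add: Amonoid_def)
  qed
next
  fix a b c assume "a \<in> Acar n p" "b \<in> Acar n p" "c \<in> Acar n p"
  then show "odot n p (odot n p a b) c = odot n p a (odot n p b c)" using assoc[OF assms] by simp
next
  fix a b assume "a \<in> Acar n p" "b \<in> Acar n p"
  then show "odot n p a b = odot n p b a" using commA assms by simp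
qed

end
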